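(* For every $\epsilon>0$ there is $N=N(\epsilon)$ such that every connected graph $G=(V,E)$ with $n>N$ vertices and minimum degree at least $\epsilon n$ satisfies the following. There is a partition of $V$ into $k\le N$ sets $V_1,\ldots,V_k$ and an edge coloring $\chi:E\to\mathcal C$, where $\mathcal C=\{a_1,a_2,a_3,a_4,b_1,b_2,b_3,b_4\}$ is a set of eight distinct colors, such that for every $i\in[k]$ and every $u,v\in V_i$, the pair $u,v$ is both $a$-rainbow connected and $b$-rainbow connected under $\chi$.
   Context: All graphs are finite, simple and undirected. A path is rainbow if its edges have pairwise distinct colors. Under a coloring $\chi:E\to\mathcal C$, vertices $u,v$ are $a$-rainbow connected if there is a rainbow path from $u$ to $v$ all of whose edges have colors in $\{a_1,a_2,a_3,a_4\}$, and $b$-rainbow connected if there is a rainbow path from $u$ to $v$ all of whose edges have colors in $\{b_1,b_2,b_3,b_4\}$. *)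

theory Defs
  imports Complex_Main "HOL-Library.Disjoint_Sets"
begin

definition simple_graph :: "'a set \<Rightarrow> 'a set set \<Rightarrow> bool" where
  "simple_graph V E \<longleftrightarrow> finite V \<and> (\<forall>e\<in>E. e \<subseteq> V \<and> card e = 2)"

definition degree :: "'a set set \<Rightarrow> 'a \<Rightarrow> nat" where
  "degree E v = card {e \<in> E. v \<in> e}"

definition is_path :: "'a set set \<Rightarrow> 'a list \<Rightarrow> bool" where
  "is_path E ps \<longleftrightarrow> ps \<noteq> [] \<and> distinct ps \<and>
     (\<forall>i. Suc i < length ps \<longrightarrow> {ps ! i, ps ! Suc i} \<in> E)"

definition path_edges :: "'a list \<Rightarrow> 'a set list" where
  "path_edges ps = map (\<lambda>i. {ps ! i, ps ! Suc i}) [0..<length ps - 1]"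

definition connected_graph :: "'a set \<Rightarrow> 'a set set \<Rightarrow> bool" where
  "connected_graph V E \<longleftrightarrow> V \<noteq> {} \<and>
     (\<forall>u\<in>V. \<forall>v\<in>V. \<exists>ps. is_path E ps \<and> hd ps = u \<and> last ps = v)"

datatype colour = a1 | a2 | a3 | a4 | b1 | b2 | b3 | b4

definition rainbow_connected_in ::
    "'a set set \<Rightarrow> ('a set \<Rightarrow> colour) \<Rightarrow> colour set \<Rightarrow> 'a \<Rightarrow> 'a \<Rightarrow> bool" where
  "rainbow_connected_in E \<chi> C u v \<longleftrightarrow>
     (\<exists>ps. is_path E ps \<and> hd ps = u \<and> last ps = v \<and>
        distinct (map \<chi> (path_edges ps)) \<and> set (map \<chi> (path_edges ps)) \<subseteq> C)"

definition a_rainbow_connected where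
  "a_rainbow_connected E \<chi> u v \<longleftrightarrow> rainbow_connected_in E \<chi> {a1, a2, a3, a4} u v"

definition b_rainbow_connected where
  "b_rainbow_connected E \<chi> u v \<longleftrightarrow> rainbow_connected_in E \<chi> {b1, b2, b3, b4} u v"

end

theory Submission
  imports Defs "HOL-Library.FuncSet"
begin

definition pp :: "nat \<Rightarrow> nat \<Rightarrow> nat" where
  "pp h c = 2*h + ((c mod 2) + (if c div 2 \<le> h then 1 else 0)) mod 2"
definition col1 :: "nat \<Rightarrow> colour" where
  "col1 h = (if h=0 then a1 else if h=1 then a4 else if h=2 then b1 else b4)"
definition col2 :: "nat \<Rightarrow> colour" where
  "col2 h = (if h=0 then a2 else if h=1 then a3 else if h=2 then b2 else b3)"
definition GG :: "nat \<Rightarrow> nat \<Rightarrow> colour" where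
  "GG c d = (if c = 8 \<and> d = 8 then a1 else if c = 8 then col2 (d div 2)
     else if d = 8 then col2 (c div 2)
     else if d = pp (d div 2) c then col1 (d div 2)
     else if c = pp (c div 2) d then col1 (c div 2) else a1)"
lemma GG_sym: assumes "c \<le> 8" "d \<le> 8" shows "GG c d = GG d c"
proof -
  have "c = 0 \<or> c = 1 \<or> c = 2 \<or> c = 3 \<or> c = 4 \<or> c = 5 \<or> c = 6 \<or> c = 7 \<or> c = 8" using assms by auto
  moreover have "d = 0 \<or> d = 1 \<or> d = 2 \<or> d = 3 \<or> d = 4 \<or> d = 5 \<or> d = 6 \<or> d = 7 \<or> d = 8" using assms by auto
  ultimately show ?thesis by (elim disjE; simp add: GG_def pp_def col1_def col2_def)
qed
lemma pp_facts: assumes "c < 8" "h < 4"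
  shows "pp h c < 8" "pp h c div 2 = h" "pp h c \<noteq> c" "GG c (pp h c) = col1 h"
proof -
  have "c = 0 \<or> c = 1 \<or> c = 2 \<or> c = 3 \<or> c = 4 \<or> c = 5 \<or> c = 6 \<or> c = 7" using assms by auto
  moreover have "h = 0 \<or> h = 1 \<or> h = 2 \<or> h = 3" using assms by auto
  ultimately show "pp h c < 8" "pp h c div 2 = h" "pp h c \<noteq> c" "GG c (pp h c) = col1 h"
    by (elim disjE; simp add: GG_def pp_def col1_def col2_def)+
qed
lemma "pp 0 c \<noteq> pp 1 c" "pp 2 c \<noteq> pp 3 c" by (auto simp: pp_def)

lemma pp_ne: "pp 0 c \<noteq> pp 1 c" "pp 2 c \<noteq> pp 3 c" by (auto simp: pp_def)

lemma GG_hub1: "d < 8 \<Longrightarrow> GG 8 d = col2 (d div 2)" by (simp add: GG_def)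
lemma GG_hub2: "c < 8 \<Longrightarrow> GG c 8 = col2 (c div 2)" by (simp add: GG_def)

definition nb :: "'a set set \<Rightarrow> 'a \<Rightarrow> 'a set" where "nb E u = {w. {u,w} \<in> E}"

lemma nb_sub: "simple_graph V E \<Longrightarrow> nb E u \<subseteq> V"
  unfolding simple_graph_def nb_def by auto

lemma nb_card: assumes "simple_graph V E" shows "card (nb E u) = degree E u"
proof -
  have "bij_betw (\<lambda>w. {u,w}) (nb E u) {e \<in> E. u \<in> e}"
  proof (rule bij_betwI')
    show "\<And>x y. x \<in> nb E u \<Longrightarrow> y \<in> nb E u \<Longrightarrow> ({u, x} = {u, y}) = (x = y)"
      by (auto simp: doubleton_eq_iff)
    show "\<And>x. x \<in> nb E u \<Longrightarrow> {u, x} \<in> {e \<in> E. u \<in> e}" by (auto simp: nb_def)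
    fix e assume e: "e \<in> {e \<in> E. u \<in> e}"
    then have "card e = 2" using assms by (auto simp: simple_graph_def)
    then obtain x y where "e = {x,y}" by (auto simp: card_2_iff)
    with e show "\<exists>x\<in>nb E u. e = {u, x}" by (auto simp: nb_def insert_commute)
  qed
  then show ?thesis unfolding degree_def by (simp add: bij_betw_same_card)
qed

lemma bonf:
  fixes A :: "'a \<Rightarrow> 'b set"
  assumes "finite T" "\<And>x. finite (A x)" "d \<ge> 0"
    "\<forall>x\<in>T. \<forall>y\<in>T. x \<noteq> y \<longrightarrow> real (card (A x \<inter> A y)) \<le> d"
  shows "real (card (\<Union>x\<in>T. A x)) \<ge> (\<Sum>x\<in>T. real (card (A x))) - real (card T)^2 * d"
  using assms(1,4)
proof (induction T rule: finite_induct)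
  case empty then show ?case by simp
next
  case (insert a T)
  let ?U = "\<Union>x\<in>T. A x"
  have IH: "real (card ?U) \<ge> (\<Sum>x\<in>T. real (card (A x))) - real (card T)^2 * d"
    using insert by auto
  have fU: "finite ?U" using insert assms(2) by auto
  have cu: "card (A a \<union> ?U) + card (A a \<inter> ?U) = card (A a) + card ?U"
    using card_Un_Int[OF assms(2) fU] by simp
  have "A a \<inter> ?U = (\<Union>y\<in>T. A a \<inter> A y)" by auto
  then have "card (A a \<inter> ?U) \<le> (\<Sum>y\<in>T. card (A a \<inter> A y))"
    using card_UN_le[OF insert(1), of "\<lambda>y. A a \<inter> A y"] by simp
  then have "real (card (A a \<inter> ?U)) \<le> (\<Sum>y\<in>T. real (card (A a \<inter> A y)))"
    by (metis of_nat_le_iff of_nat_sum)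
  also have "\<dots> \<le> (\<Sum>y\<in>T. d)"
    by (rule sum_mono) (use insert in auto)
  also have "\<dots> = real (card T) * d" by simp
  finally have ai: "real (card (A a \<inter> ?U)) \<le> real (card T) * d" .
  have "real (card (\<Union>x\<in>insert a T. A x)) = real (card (A a \<union> ?U))" by simp
  also have "\<dots> = real (card (A a)) + real (card ?U) - real (card (A a \<inter> ?U))"
    using cu by (metis add_diff_cancel_right' of_nat_add)
  finally have e1: "real (card (\<Union>x\<in>insert a T. A x)) = real (card (A a)) + real (card ?U) - real (card (A a \<inter> ?U))" .
  have "real (card T)^2 * d + real (card T) * d \<le> real (card (insert a T))^2 * d"
    using insert(2) insert(1) assms(3) by (simp add: power2_eq_square algebra_simps)
  then show ?case using e1 IH ai insert(1,2) by simp
qed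

lemma hubs:
  fixes A :: "nat \<Rightarrow> nat set" and e :: real and m0 :: nat
  assumes "finite V" "\<forall>x\<in>V. A x \<subseteq> V" "\<forall>x\<in>V. real (card (A x)) \<ge> e * real (card V)"
    "real m0 * e \<ge> 3" "V \<noteq> {}" "e > 0"
  shows "\<exists>H\<subseteq>V. card H < m0 \<and> (\<forall>u\<in>V-H. \<exists>x\<in>H. real (card (A u \<inter> A x)) \<ge> e/(2*m0) * real (card V))"
proof -
  define n where "n = real (card V)"
  define dd where "dd = e/(2*m0) * n"
  have n0: "n > 0" using assms(1,5) by (simp add: n_def card_gt_0_iff)
  have m0pos: "m0 > 0" using assms(4) by (cases m0) auto
  have dd0: "dd \<ge> 0" using assms(6) n0 by (simp add: dd_def)
  define good where "good S \<longleftrightarrow> S \<subseteq> V \<and> (\<forall>x\<in>S. \<forall>y\<in>S. x \<noteq> y \<longrightarrow> real (card (A x \<inter> A y)) < dd)" for S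
  have fin: "\<And>x. x \<in> V \<Longrightarrow> finite (A x)" using assms(1,2) finite_subset by blast
  have bound: "card S < m0" if "good S" for S
  proof (rule ccontr)
    assume "\<not> card S < m0"
    then obtain T where T: "T \<subseteq> S" "card T = m0" using obtain_subset_with_card_n by (metis not_less)
    have TV: "T \<subseteq> V" using T that by (auto simp: good_def)
    have fT: "finite T" using TV assms(1) finite_subset by blast
    define A' where "A' x = (if x \<in> V then A x else {})" for x
    have "real (card (\<Union>x\<in>T. A' x)) \<ge> (\<Sum>x\<in>T. real (card (A' x))) - real (card T)^2 * dd"
      apply (rule bonf[OF fT _ dd0])
      using fin apply (simp add: A'_def)
      using that T TV by (auto simp: good_def A'_def less_imp_le subset_iff)
    moreover have "(\<Sum>x\<in>T. real (card (A' x))) \<ge> real (card T) * (e * n)"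
      by (rule sum_bounded_below) (use TV assms(3) in \<open>auto simp: A'_def n_def\<close>)
    moreover have "(\<Union>x\<in>T. A' x) \<subseteq> V" using assms(2) TV by (auto simp: A'_def)
    then have "real (card (\<Union>x\<in>T. A' x)) \<le> n" unfolding n_def using assms(1) card_mono by auto
    ultimately have "n \<ge> real m0 * (e*n) - real m0 ^2 * dd" using T by simp
    moreover have "real m0 ^2 * dd = real m0 * e * n / 2" using m0pos
      by (simp add: dd_def power2_eq_square field_simps)
    ultimately have "n \<ge> real m0 * e * n / 2" by (simp add: algebra_simps)
    moreover have "real m0 * e * n \<ge> 3 * n" using assms(4) n0 by (simp add: mult_right_mono)
    ultimately show False using n0 by simp
  qed
  have "good {}" by (simp add: good_def)
  moreover have "\<forall>S. good S \<longrightarrow> card S < card V + 1"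
    using assms(1) card_mono by (fastforce simp: good_def)
  ultimately obtain H where H: "good H" "\<forall>S. good S \<longrightarrow> card S \<le> card H"
    using ex_has_greatest_nat[of good "{}" card "card V + 1"] by blast
  have "\<forall>u\<in>V-H. \<exists>x\<in>H. real (card (A u \<inter> A x)) \<ge> dd"
  proof
    fix u assume u: "u \<in> V - H"
    have fH: "finite H" using H(1) assms(1) finite_subset by (auto simp: good_def)
    have "card (insert u H) > card H" using u fH by simp
    then have "\<not> good (insert u H)" using H(2) by fastforce
    then obtain x y where xy: "x \<in> insert u H" "y \<in> insert u H" "x \<noteq> y" "real (card (A x \<inter> A y)) \<ge> dd"
      using u H(1) by (auto simp: good_def not_less)
    then show "\<exists>x\<in>H. real (card (A u \<inter> A x)) \<ge> dd"
      using H(1) unfolding good_def by (metis Int_commute insertE not_less)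
  qed
  then show ?thesis using H(1) bound unfolding dd_def n_def good_def by blast
qed



lemma colouring:
  fixes D :: "'b \<Rightarrow> 'a set"
  assumes "finite W" "finite U" "\<forall>u\<in>U. D u \<subseteq> W"
    "(\<Sum>u\<in>U. 8 * (7/8::real)^card (D u)) < 1"
  shows "\<exists>f. (\<forall>w\<in>W. f w < (8::nat)) \<and> (\<forall>u\<in>U. \<forall>c<8. \<exists>w\<in>D u. f w = c)"
proof -
  define \<Omega> where "\<Omega> = PiE W (\<lambda>_. {..<8::nat})"
  define Bad where "Bad u c = {f\<in>\<Omega>. \<forall>w\<in>D u. f w \<noteq> c}" for u c
  have cO: "card \<Omega> = 8 ^ card W" unfolding \<Omega>_def using assms(1) by (simp add: card_PiE)
  have cB: "real (card (Bad u c)) = 8 ^ card W * (7/8)^card (D u)" if u: "u \<in> U" and c: "c < 8" for u c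
  proof -
    have DW: "D u \<subseteq> W" using assms(3) u by auto
    have "Bad u c = PiE W (\<lambda>w. if w \<in> D u then {..<8}-{c} else {..<8})"
      unfolding Bad_def \<Omega>_def using DW by (auto simp: PiE_iff extensional_def split: if_splits)
    then have "card (Bad u c) = (\<Prod>w\<in>W. card (if w \<in> D u then {..<8}-{c} else {..<8::nat}))"
      using assms(1) by (simp add: card_PiE)
    also have "\<dots> = (\<Prod>w\<in>W. if w \<in> D u then 7 else 8)"
      by (rule prod.cong) (use c in auto)
    also have "\<dots> = 7 ^ card (W \<inter> {w. w \<in> D u}) * 8 ^ card (W \<inter> - {w. w \<in> D u})"
      using assms(1) by (simp add: prod.If_cases)
    also have "W \<inter> {w. w \<in> D u} = D u" using DW by auto
    also have "W \<inter> - {w. w \<in> D u} = W - D u" by auto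
    also have "card (W - D u) = card W - card (D u)" using DW assms(1) finite_subset
      by (metis card_Diff_subset)
    finally have e: "card (Bad u c) = 7 ^ card (D u) * 8 ^ (card W - card (D u))" .
    have le: "card (D u) \<le> card W" using DW assms(1) card_mono by auto
    have "(8::real) ^ card W = 8 ^ card (D u) * 8 ^ (card W - card (D u))"
      using le by (simp add: power_add[symmetric])
    then have "(8::real) ^ card W * (7/8)^card (D u) = (8 * (7/8)) ^ card (D u) * 8 ^ (card W - card (D u))"
      by (simp add: power_mult_distrib[symmetric])
    then show ?thesis using e by simp
  qed
  have sub: "(\<Union>u\<in>U. \<Union>c\<in>{..<8}. Bad u c) \<subseteq> \<Omega>" by (auto simp: Bad_def)
  have "card (\<Union>u\<in>U. \<Union>c\<in>{..<8}. Bad u c) \<le> (\<Sum>u\<in>U. card (\<Union>c\<in>{..<8::nat}. Bad u c))"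
    by (rule card_UN_le[OF assms(2)])
  also have "\<dots> \<le> (\<Sum>u\<in>U. \<Sum>c\<in>{..<8::nat}. card (Bad u c))"
    by (rule sum_mono) (rule card_UN_le, simp)
  finally have "real (card (\<Union>u\<in>U. \<Union>c\<in>{..<8}. Bad u c)) \<le> (\<Sum>u\<in>U. \<Sum>c\<in>{..<8::nat}. real (card (Bad u c)))"
    by (metis (no_types, lifting) of_nat_le_iff of_nat_sum sum.cong)
  also have "\<dots> = (\<Sum>u\<in>U. \<Sum>c\<in>{..<8::nat}. 8 ^ card W * (7/8)^card (D u))"
    by (rule sum.cong, simp, rule sum.cong, simp_all add: cB)
  also have "\<dots> = 8 ^ card W * (\<Sum>u\<in>U. 8 * (7/8::real)^card (D u))"
    by (simp add: sum_distrib_left mult.left_commute)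
  also have "\<dots> < 8 ^ card W" using assms(4) by simp
  finally have "card (\<Union>u\<in>U. \<Union>c\<in>{..<8}. Bad u c) < card \<Omega>" using cO
    by (metis of_nat_less_iff of_nat_numeral of_nat_power)
  then obtain f where f: "f \<in> \<Omega>" "f \<notin> (\<Union>u\<in>U. \<Union>c\<in>{..<8}. Bad u c)"
    using sub by (metis card_mono finite_PiE \<Omega>_def assms(1) finite_lessThan not_less subsetI subset_antisym)
  show ?thesis
    using f by (auto simp: Bad_def \<Omega>_def PiE_iff)
qed

lemma asym:
  fixes d :: real and m :: nat
  assumes "d > 0"
  shows "\<exists>N0. \<forall>n>N0. real n * 8 * (7/8) powr (d * real n - real m) < 1"
proof -
  define q where "q = (7/8::real) powr d"
  have q0: "0 < q" "q < 1" using assms powr_less_mono2[of d "7/8" 1] by (auto simp: q_def)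
  have "(\<lambda>n. of_nat n * q ^ n) \<longlonglongrightarrow> 0"
    by (rule powser_times_n_limit_0) (use q0 in simp)
  moreover have "0 < 1 / (8 * (8/7::real)^m)" by simp
  ultimately have "eventually (\<lambda>n. dist (of_nat n * q ^ n) 0 < 1 / (8 * (8/7::real)^m)) sequentially"
    using tendstoD by blast
  then obtain N0 where N0: "\<And>n. n \<ge> N0 \<Longrightarrow> real n * q ^ n < 1 / (8 * (8/7::real)^m)"
    by (auto simp: eventually_sequentially) (meson abs_less_iff)
  have "real n * 8 * (7/8) powr (d * real n - real m) < 1" if "n > N0" for n
  proof -
    have "(7/8::real) powr (d * real n - real m) = (7/8) powr (d * real n) / (7/8) powr real m"
      by (simp add: powr_diff)
    also have "(7/8::real) powr (d * real n) = q ^ n"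
      by (simp add: q_def powr_powr[symmetric] powr_realpow)
    also have "(7/8::real) powr real m = (7/8)^m" by (simp add: powr_realpow)
    finally have e: "(7/8::real) powr (d * real n - real m) = q^n * (8/7)^m"
      by (simp add: power_divide)
    have "real n * q^n * (8 * (8/7)^m) < 1" using N0[of n] that
      by (simp add: field_simps)
    then show ?thesis using e by (simp add: algebra_simps)
  qed
  then show ?thesis by blast
qed



lemma single_path: "rainbow_connected_in E \<chi> C u u"
  unfolding rainbow_connected_in_def
  by (rule exI[of _ "[u]"]) (simp add: is_path_def path_edges_def)

lemma five_path:
  assumes "distinct [u,y,x,z,v]" "{u,y} \<in> E" "{y,x} \<in> E" "{x,z} \<in> E" "{z,v} \<in> E"
    "distinct [\<chi> {u,y}, \<chi> {y,x}, \<chi> {x,z}, \<chi> {z,v}]"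
    "{\<chi> {u,y}, \<chi> {y,x}, \<chi> {x,z}, \<chi> {z,v}} \<subseteq> C"
  shows "rainbow_connected_in E \<chi> C u v"
proof -
  have pe: "path_edges [u,y,x,z,v] = [{u,y},{y,x},{x,z},{z,v}]"
    by (simp add: path_edges_def upt_rec)
  have "is_path E [u,y,x,z,v]"
    unfolding is_path_def using assms(1-5)
    by (auto simp: less_Suc_eq nth_Cons')
  then show ?thesis unfolding rainbow_connected_in_def
    using assms(6,7) by (intro exI[of _ "[u,y,x,z,v]"]) (simp add: pe)
qed



theorem lemma3p6:
  fixes \<epsilon> :: real
  assumes "\<epsilon> > 0"
  shows "\<exists>N::nat. \<forall>(V::nat set) E.
           simple_graph V E \<and> connected_graph V E \<and> card V > N \<and>
           (\<forall>v\<in>V. real (degree E v) \<ge> \<epsilon> * real (card V)) \<longrightarrow>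
           (\<exists>k::nat. \<exists>P::nat \<Rightarrow> nat set. \<exists>\<chi>::nat set \<Rightarrow> colour.
              k \<le> N \<and>
              (\<forall>i\<in>{1..k}. P i \<noteq> {}) \<and>
              disjoint_family_on P {1..k} \<and>
              (\<Union>i\<in>{1..k}. P i) = V \<and>
              (\<forall>i\<in>{1..k}. \<forall>u\<in>P i. \<forall>v\<in>P i.
                 a_rainbow_connected E \<chi> u v \<and> b_rainbow_connected E \<chi> u v))"
proof -
  define m0 :: nat where "m0 = nat \<lceil>3/\<epsilon>\<rceil> + 1"
  have "real m0 \<ge> 3/\<epsilon>" unfolding m0_def by linarith
  then have m0e: "real m0 * \<epsilon> \<ge> 3" using assms by (simp add: field_simps)
  have m0pos: "m0 > 0" by (simp add: m0_def)
  define \<delta> where "\<delta> = \<epsilon>/(2*m0)"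
  have \<delta>pos: "\<delta> > 0" using assms m0pos by (simp add: \<delta>_def)
  obtain N0 where N0: "\<forall>n>N0. real n * 8 * (7/8) powr (\<delta> * real n - real m0) < 1"
    using asym[OF \<delta>pos] by blast
  define N where "N = max N0 (9*m0)"
  show ?thesis
  proof (rule exI[of _ N], intro allI impI)
    fix V :: "nat set" and E
    assume asm: "simple_graph V E \<and> connected_graph V E \<and> card V > N \<and>
           (\<forall>v\<in>V. real (degree E v) \<ge> \<epsilon> * real (card V))"
    then have sg: "simple_graph V E" and cV: "card V > N"
      and deg: "\<forall>v\<in>V. real (degree E v) \<ge> \<epsilon> * real (card V)" by auto
    have finV: "finite V" using sg by (simp add: simple_graph_def)
    have Vne: "V \<noteq> {}" using cV by auto
    define A where "A = nb E"
    have AV: "\<forall>x\<in>V. A x \<subseteq> V" using nb_sub[OF sg] by (simp add: A_def)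
    have Adeg: "\<forall>x\<in>V. real (card (A x)) \<ge> \<epsilon> * real (card V)"
      using deg nb_card[OF sg] by (simp add: A_def)
    obtain H where H: "H \<subseteq> V" "card H < m0"
      and hp: "\<forall>u\<in>V-H. \<exists>x\<in>H. real (card (A u \<inter> A x)) \<ge> \<epsilon>/(2*m0) * real (card V)"
      using hubs[OF finV AV Adeg m0e Vne assms] by blast
    define hub where "hub u = (SOME x. x \<in> H \<and> real (card (A u \<inter> A x)) \<ge> \<delta> * real (card V))" for u
    have hub: "hub u \<in> H \<and> real (card (A u \<inter> A (hub u))) \<ge> \<delta> * real (card V)" if "u \<in> V - H" for u
    proof -
      have "\<exists>x. x \<in> H \<and> real (card (A u \<inter> A x)) \<ge> \<delta> * real (card V)"
        using hp that by (auto simp: \<delta>_def)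
      then show ?thesis unfolding hub_def by (rule someI_ex)
    qed
    define D where "D u = (A u \<inter> A (hub u)) - H" for u
    have DV: "\<forall>u\<in>V-H. D u \<subseteq> V - H" using AV by (auto simp: D_def)
    have Dcard: "real (card (D u)) \<ge> \<delta> * real (card V) - real m0" if u: "u \<in> V - H" for u
    proof -
      have fin: "finite (A u \<inter> A (hub u))" using AV u finV finite_subset by blast
      have "card (A u \<inter> A (hub u)) \<le> card (D u \<union> H)"
        by (rule card_mono) (use finV H(1) fin in \<open>auto simp: D_def intro: finite_subset\<close>)
      also have "\<dots> \<le> card (D u) + card H" by (rule card_Un_le)
      finally show ?thesis using hub[OF u] H(2) by linarith
    qed
    have sumb: "(\<Sum>u\<in>V-H. 8 * (7/8::real)^card (D u)) < 1"
    proof -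
      have "(\<Sum>u\<in>V-H. 8 * (7/8::real)^card (D u)) \<le> real (card (V-H)) * (8 * (7/8) powr (\<delta> * real (card V) - real m0))"
      proof (rule sum_bounded_above)
        fix u assume u: "u \<in> V - H"
        have "(7/8::real)^card (D u) = (7/8) powr real (card (D u))" by (simp add: powr_realpow)
        also have "\<dots> \<le> (7/8) powr (\<delta> * real (card V) - real m0)"
          by (rule powr_mono') (use Dcard[OF u] in auto)
        finally show "8 * (7/8::real)^card (D u) \<le> 8 * (7/8) powr (\<delta> * real (card V) - real m0)" by simp
      qed
      also have "\<dots> \<le> real (card V) * (8 * (7/8) powr (\<delta> * real (card V) - real m0))"
        by (rule mult_right_mono) (use finV in \<open>auto intro: card_mono\<close>)
      also have "\<dots> < 1" using N0 cV by (simp add: N_def mult.assoc)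
      finally show ?thesis .
    qed
    obtain f where f: "\<forall>w\<in>V-H. f w < (8::nat)" "\<forall>u\<in>V-H. \<forall>c<8. \<exists>w\<in>D u. f w = c"
      using colouring[of "V-H" "V-H" D] finV DV sumb by auto
    define cls where "cls v = (if v \<in> H then 8 else if f v < 8 then f v else 0)" for v
    have cls8: "cls v \<le> 8" for v by (simp add: cls_def)
    define \<chi> where "\<chi> e = (SOME col. \<forall>p q. e = {p,q} \<longrightarrow> col = GG (cls p) (cls q))" for e
    have chi: "\<chi> {p,q} = GG (cls p) (cls q)" for p q
    proof -
      have "\<forall>p' q'. {p,q} = {p',q'} \<longrightarrow> GG (cls p) (cls q) = GG (cls p') (cls q')"
        using GG_sym cls8 by (auto simp: doubleton_eq_iff)
      then have "\<forall>p' q'. {p,q} = {p',q'} \<longrightarrow> \<chi> {p,q} = GG (cls p') (cls q')"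
        unfolding \<chi>_def by (rule someI)
      then show ?thesis by blast
    qed
    have gen: "rainbow_connected_in E \<chi> C u v"
      if uv: "u \<in> V - H" "v \<in> V - H" "u \<noteq> v" "hub u = hub v" "cls u = cls v"
        and h: "h1 < 4" "h2 < 4" "h1 \<noteq> h2" "distinct [col1 h1, col2 h1, col2 h2, col1 h2]"
        "{col1 h1, col2 h1, col2 h2, col1 h2} \<subseteq> C" for u v h1 h2 C
    proof -
      define x where "x = hub u"
      define c where "c = cls u"
      have xH: "x \<in> H" using hub[OF uv(1)] by (simp add: x_def)
      have c8: "c < 8" "c = f u" using f(1) uv(1) by (auto simp: c_def cls_def)
      have pf1: "pp h1 c < 8" "pp h1 c div 2 = h1" "pp h1 c \<noteq> c" "GG c (pp h1 c) = col1 h1"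
        using pp_facts[OF c8(1) h(1)] by auto
      have pf2: "pp h2 c < 8" "pp h2 c div 2 = h2" "pp h2 c \<noteq> c" "GG c (pp h2 c) = col1 h2"
        using pp_facts[OF c8(1) h(2)] by auto
      obtain y where y: "y \<in> D u" "f y = pp h1 c" using f(2) uv(1) pf1(1) by blast
      obtain z where z: "z \<in> D v" "f z = pp h2 c" using f(2) uv(2) pf2(1) by blast
      have cy: "cls y = pp h1 c" using y pf1 by (auto simp: cls_def D_def)
      have cz: "cls z = pp h2 c" using z pf2 by (auto simp: cls_def D_def)
      have cx: "cls x = 8" using xH by (simp add: cls_def)
      have cv: "cls v = c" using uv by (simp add: c_def)
      have hv: "hub v = x" using uv by (simp add: x_def)
      have cyz: "pp h1 c \<noteq> pp h2 c" using pf1(2) pf2(2) h(3) by metis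
      have cu: "cls u = c" by (simp add: c_def)
      have d: "u \<noteq> y" "u \<noteq> x" "u \<noteq> z" "y \<noteq> x" "y \<noteq> z" "y \<noteq> v" "x \<noteq> z" "x \<noteq> v" "z \<noteq> v"
        using cu cy cz cx cv pf1(1,3) pf2(1,3) cyz c8(1) by auto
      have dist: "distinct [u,y,x,z,v]" using d uv(3) by auto
      have e1: "{u,y} \<in> E" using y by (simp add: D_def A_def nb_def)
      have e2: "{y,x} \<in> E" using y by (simp add: D_def A_def nb_def x_def insert_commute)
      have e3: "{x,z} \<in> E" using z hv by (simp add: D_def A_def nb_def)
      have e4: "{z,v} \<in> E" using z by (simp add: D_def A_def nb_def insert_commute)
      have col1': "\<chi> {u,y} = col1 h1" using chi[of u y] cu cy pf1(4) by simp
      have col2': "\<chi> {y,x} = col2 h1" using chi[of y x] cy cx pf1(1,2) GG_hub2[of "pp h1 c"] by simp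
      have col3': "\<chi> {x,z} = col2 h2" using chi[of x z] cz cx pf2(1,2) GG_hub1[of "pp h2 c"] by simp
      have "GG (pp h2 c) c = GG c (pp h2 c)" using GG_sym[of "pp h2 c" c] pf2(1) c8(1) by simp
      then have col4': "\<chi> {z,v} = col1 h2" using chi[of z v] cz cv pf2(4) by simp
      note col = col1' col2' col3' col4'
      show ?thesis
        by (rule five_path[OF dist e1 e2 e3 e4]) (use col h(4,5) in simp_all)
    qed
    define key where "key v = (if v \<in> H then (v, 8::nat) else (hub v, cls v))" for v
    have main: "a_rainbow_connected E \<chi> u v \<and> b_rainbow_connected E \<chi> u v"
      if "u \<in> V" "v \<in> V" "key u = key v" for u v
    proof (cases "u = v")
      case True then show ?thesis
        by (simp add: a_rainbow_connected_def b_rainbow_connected_def single_path)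
    next
      case False
      have cl: "cls w < 8" if "w \<notin> H" for w using that by (simp add: cls_def)
      have nh: "u \<in> V - H" "v \<in> V - H" "hub u = hub v" "cls u = cls v"
        using that False cl[of u] cl[of v] by (auto simp: key_def split: if_splits)
      show ?thesis
        unfolding a_rainbow_connected_def b_rainbow_connected_def
        using gen[OF nh(1,2) False nh(3,4), of 0 1] gen[OF nh(1,2) False nh(3,4), of 2 3]
        by (simp add: col1_def col2_def)
    qed
    define blk where "blk \<kappa> = {w\<in>V. key w = \<kappa>}" for \<kappa>
    define \<P> where "\<P> = blk ` key ` V"
    have finP: "finite \<P>" using finV by (simp add: \<P>_def)
    obtain g where g: "bij_betw g {1..card \<P>} \<P>" using ex_bij_betw_nat_finite_1[OF finP] by blast
    have keyH: "key ` V \<subseteq> H \<times> {..8}"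
      using hub cls8 by (auto simp: key_def)
    have finH: "finite H" using H(1) finV finite_subset by blast
    have "card \<P> \<le> card (key ` V)" unfolding \<P>_def by (rule card_image_le) (use finV in simp)
    also have "\<dots> \<le> card (H \<times> {..8::nat})" by (rule card_mono) (use finH keyH in auto)
    also have "\<dots> = card H * 9" by (simp add: card_cartesian_product)
    also have "\<dots> \<le> N" using H(2) by (simp add: N_def)
    finally have kN: "card \<P> \<le> N" .
    have gimg: "g ` {1..card \<P>} = \<P>" using g by (simp add: bij_betw_def)
    have ginj: "inj_on g {1..card \<P>}" using g by (simp add: bij_betw_def)
    show "\<exists>k P \<chi>. k \<le> N \<and> (\<forall>i\<in>{1..k}. P i \<noteq> {}) \<and> disjoint_family_on P {1..k} \<and>
           (\<Union>i\<in>{1..k}. P i) = V \<and>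
           (\<forall>i\<in>{1..k}. \<forall>u\<in>P i. \<forall>v\<in>P i. a_rainbow_connected E \<chi> u v \<and> b_rainbow_connected E \<chi> u v)"
    proof (intro exI conjI)
      show "card \<P> \<le> N" by (rule kN)
      show "\<forall>i\<in>{1..card \<P>}. g i \<noteq> {}"
      proof
        fix i assume "i \<in> {1..card \<P>}"
        then have "g i \<in> \<P>" using gimg by blast
        then show "g i \<noteq> {}" by (auto simp: \<P>_def blk_def)
      qed
      show "disjoint_family_on g {1..card \<P>}"
        unfolding disjoint_family_on_def
      proof (intro ballI impI)
        fix i j assume ij: "i \<in> {1..card \<P>}" "j \<in> {1..card \<P>}" "i \<noteq> j"
        then have ne: "g i \<noteq> g j" using ginj by (meson inj_on_contraD)
        have "g i \<in> \<P>" "g j \<in> \<P>" using ij gimg by auto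
        then obtain v w where "v \<in> V" "w \<in> V" "g i = blk (key v)" "g j = blk (key w)"
          unfolding \<P>_def by blast
        then show "g i \<inter> g j = {}" using ne by (auto simp: blk_def)
      qed
      show "(\<Union>i\<in>{1..card \<P>}. g i) = V"
        unfolding gimg by (auto simp: \<P>_def blk_def)
      show "\<forall>i\<in>{1..card \<P>}. \<forall>u\<in>g i. \<forall>v\<in>g i. a_rainbow_connected E \<chi> u v \<and> b_rainbow_connected E \<chi> u v"
      proof (intro ballI)
        fix i u v assume "i \<in> {1..card \<P>}" "u \<in> g i" "v \<in> g i"
        then have "g i \<in> \<P>" "u \<in> g i" "v \<in> g i" using gimg by auto
        then obtain w where "u \<in> blk (key w)" "v \<in> blk (key w)" unfolding \<P>_def by blast
        then show "a_rainbow_connected E \<chi> u v \<and> b_rainbow_connected E \<chi> u v"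
          using main by (auto simp: blk_def)
      qed
    qed
  qed
qed

end
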